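(* Let $(M,\circ)$ be a fuzzy $\Gamma$-hypersemigroup and let $(M,\ast)$ be its associated $\Gamma$-hypersemigroup, where $a\ast\gamma\ast b=\{x\in M\mid (a\circ\gamma\circ b)(x)>0\}$ for all $a,b\in M$, $\gamma\in\Gamma$. Let $\rho$ be an equivalence relation on $M$, and on $M/\rho=\{a\rho : a\in M\}$ define $a\rho\otimes\gamma\otimes b\rho=\{c\rho : c\in a\ast\gamma\ast b\}=\{c\rho : (a\circ\gamma\circ b)(c)>0\}$. Then: (i) $\rho$ is a fuzzy $\Gamma$-regular relation on $(M,\circ)$ if and only if $(M/\rho,\otimes)$ is a $\Gamma$-hypersemigroup. (ii) $\rho$ is a fuzzy $\Gamma$-strongly regular relation on $(M,\circ)$ if and only if $(M/\rho,\otimes)$ is a $\Gamma$-semigroup.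
   Context: $M$ and $\Gamma$ are non-empty sets; $F(M)$ is the set of fuzzy subsets of $M$. A fuzzy $\Gamma$-hyperoperation is a map $M\times\Gamma\times M\to F(M)$, $(a,\gamma,b)\mapsto a\circ\gamma\circ b$. For a fuzzy subset $\mu\neq 0$, $(a\circ\alpha\circ\mu)(r)=\bigvee_{t\in M}((a\circ\alpha\circ t)(r)\wedge\mu(t))$ and $(\mu\circ\alpha\circ a)(r)=\bigvee_{t\in M}(\mu(t)\wedge(t\circ\alpha\circ a)(r))$ (both $0$ if $\mu=0$). $(M,\circ)$ is a fuzzy $\Gamma$-hypersemigroup if $(a\circ\alpha\circ b)\circ\beta\circ c=a\circ\alpha\circ(b\circ\beta\circ c)$ for all $a,b,c\in M$, $\alpha,\beta\in\Gamma$. A $\Gamma$-hypersemigroup is a set $M$ where each $\gamma\in\Gamma$ is a hyperoperation $x\gamma y\subseteq M$ (non-empty) with $x\alpha(y\beta z)=(x\alpha y)\beta z$; it is a $\Gamma$-semigroup when each $\gamma$ is an operation (single-valued). For an equivalence relation $\rho$ on $M$ and fuzzy subsets $\mu,\nu$, write $\mu\rho\nu$ if (1) $\mu(a)>0$ implies there is $b$ with $\nu(b)>0$ and $a\rho b$, and (2) $\nu(x)>0$ implies there is $y$ with $\mu(y)>0$ and $x\rho y$. $\rho$ is a fuzzy $\Gamma$-regular relation on $(M,\circ)$ if for all $a,b,c\in M$, $\gamma\in\Gamma$: $a\rho b$ implies $(a\circ\gamma\circ c)\rho(b\circ\gamma\circ c)$ and $(c\circ\gamma\circ a)\rho(c\circ\gamma\circ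 b)$. $\rho$ is a fuzzy $\Gamma$-strongly regular relation on $(M,\circ)$ if for all $a,b,c,d\in M$, $\gamma\in\Gamma$ with $a\rho b$ and $c\rho d$: for all $x$ with $(a\circ\gamma\circ c)(x)>0$ and all $y$ with $(b\circ\gamma\circ d)(y)>0$, we have $x\rho y$. *)

theory Defs
  imports Complex_Main
begin

text \<open>M is modelled by the type 'm, \<Gamma> by the type 'g (types are non-empty).
  A fuzzy \<Gamma>-hyperoperation is circ :: 'm \<Rightarrow> 'g \<Rightarrow> 'm \<Rightarrow> ('m \<Rightarrow> real),
  where circ a \<gamma> b is the fuzzy subset a \<circ> \<gamma> \<circ> b.\<close>

definition is_fuzzy :: "('m \<Rightarrow> real) \<Rightarrow> bool" where
  "is_fuzzy \<mu> \<longleftrightarrow> (\<forall>x. 0 \<le> \<mu> x \<and> \<mu> x \<le> 1)"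

definition lcomp :: "('m \<Rightarrow> 'g \<Rightarrow> 'm \<Rightarrow> 'm \<Rightarrow> real) \<Rightarrow> 'm \<Rightarrow> 'g \<Rightarrow> ('m \<Rightarrow> real) \<Rightarrow> 'm \<Rightarrow> real" where
  "lcomp circ a \<alpha> \<mu> r = (if \<mu> = (\<lambda>_. 0) then 0 else (SUP t. min (circ a \<alpha> t r) (\<mu> t)))"

definition rcomp :: "('m \<Rightarrow> 'g \<Rightarrow> 'm \<Rightarrow> 'm \<Rightarrow> real) \<Rightarrow> ('m \<Rightarrow> real) \<Rightarrow> 'g \<Rightarrow> 'm \<Rightarrow> 'm \<Rightarrow> real" where
  "rcomp circ \<mu> \<alpha> a r = (if \<mu> = (\<lambda>_. 0) then 0 else (SUP t. min (\<mu> t) (circ t \<alpha> a r)))"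

definition fuzzy_Gamma_hypersemigroup :: "('m \<Rightarrow> 'g \<Rightarrow> 'm \<Rightarrow> 'm \<Rightarrow> real) \<Rightarrow> bool" where
  "fuzzy_Gamma_hypersemigroup circ \<longleftrightarrow>
     (\<forall>a \<gamma> b. is_fuzzy (circ a \<gamma> b)) \<and>
     (\<forall>a b c \<alpha> \<beta>. rcomp circ (circ a \<alpha> b) \<beta> c = lcomp circ a \<alpha> (circ b \<beta> c))"

definition assoc_hyper :: "('m \<Rightarrow> 'g \<Rightarrow> 'm \<Rightarrow> 'm \<Rightarrow> real) \<Rightarrow> 'm \<Rightarrow> 'g \<Rightarrow> 'm \<Rightarrow> 'm set" where
  "assoc_hyper circ a \<gamma> b = {x. circ a \<gamma> b x > 0}"

definition Gamma_hypersemigroup :: "'x set \<Rightarrow> ('x \<Rightarrow> 'g \<Rightarrow> 'x \<Rightarrow> 'x set) \<Rightarrow> bool" where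
  "Gamma_hypersemigroup S h \<longleftrightarrow>
     (\<forall>x\<in>S. \<forall>y\<in>S. \<forall>\<gamma>. h x \<gamma> y \<noteq> {} \<and> h x \<gamma> y \<subseteq> S) \<and>
     (\<forall>x\<in>S. \<forall>y\<in>S. \<forall>z\<in>S. \<forall>\<alpha> \<beta>.
        (\<Union>u\<in>h x \<alpha> y. h u \<beta> z) = (\<Union>v\<in>h y \<beta> z. h x \<alpha> v))"

definition Gamma_semigroup :: "'x set \<Rightarrow> ('x \<Rightarrow> 'g \<Rightarrow> 'x \<Rightarrow> 'x set) \<Rightarrow> bool" where
  "Gamma_semigroup S h \<longleftrightarrow> Gamma_hypersemigroup S h \<and>
     (\<forall>x\<in>S. \<forall>y\<in>S. \<forall>\<gamma>. \<exists>w. h x \<gamma> y = {w})"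

definition fuzzy_rel :: "('m \<times> 'm) set \<Rightarrow> ('m \<Rightarrow> real) \<Rightarrow> ('m \<Rightarrow> real) \<Rightarrow> bool" where
  "fuzzy_rel \<rho> \<mu> \<nu> \<longleftrightarrow>
     (\<forall>a. \<mu> a > 0 \<longrightarrow> (\<exists>b. \<nu> b > 0 \<and> (a, b) \<in> \<rho>)) \<and>
     (\<forall>x. \<nu> x > 0 \<longrightarrow> (\<exists>y. \<mu> y > 0 \<and> (x, y) \<in> \<rho>))"

definition fuzzy_Gamma_regular :: "('m \<Rightarrow> 'g \<Rightarrow> 'm \<Rightarrow> 'm \<Rightarrow> real) \<Rightarrow> ('m \<times> 'm) set \<Rightarrow> bool" where
  "fuzzy_Gamma_regular circ \<rho> \<longleftrightarrow>
     (\<forall>a b c \<gamma>. (a, b) \<in> \<rho> \<longrightarrow>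
        fuzzy_rel \<rho> (circ a \<gamma> c) (circ b \<gamma> c) \<and> fuzzy_rel \<rho> (circ c \<gamma> a) (circ c \<gamma> b))"

definition fuzzy_Gamma_strongly_regular :: "('m \<Rightarrow> 'g \<Rightarrow> 'm \<Rightarrow> 'm \<Rightarrow> real) \<Rightarrow> ('m \<times> 'm) set \<Rightarrow> bool" where
  "fuzzy_Gamma_strongly_regular circ \<rho> \<longleftrightarrow>
     (\<forall>a b c d \<gamma>. (a, b) \<in> \<rho> \<longrightarrow> (c, d) \<in> \<rho> \<longrightarrow>
        (\<forall>x y. circ a \<gamma> c x > 0 \<longrightarrow> circ b \<gamma> d y > 0 \<longrightarrow> (x, y) \<in> \<rho>))"

text \<open>h is the (well-defined) hyperoperation \<otimes> on M/\<rho>: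
  a\<rho> \<otimes> \<gamma> \<otimes> b\<rho> = {c\<rho> | (a \<circ> \<gamma> \<circ> b)(c) > 0} for all representatives a, b.\<close>
definition quotient_op :: "('m \<Rightarrow> 'g \<Rightarrow> 'm \<Rightarrow> 'm \<Rightarrow> real) \<Rightarrow> ('m \<times> 'm) set
    \<Rightarrow> ('m set \<Rightarrow> 'g \<Rightarrow> 'm set \<Rightarrow> 'm set set) \<Rightarrow> bool" where
  "quotient_op circ \<rho> h \<longleftrightarrow>
     (\<forall>a b \<gamma>. h (\<rho> `` {a}) \<gamma> (\<rho> `` {b}) = {\<rho> `` {c} | c. c \<in> assoc_hyper circ a \<gamma> b})"

end

theory Submission
  imports Defs
begin

abbreviation cls :: "('m \<times> 'm) set \<Rightarrow> 'm \<Rightarrow> 'm set" where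
  "cls \<rho> c \<equiv> \<rho> `` {c}"

lemma cls_iff:
  assumes "equiv UNIV \<rho>" shows "(x,y) \<in> \<rho> \<longleftrightarrow> cls \<rho> x = cls \<rho> y"
  using equiv_class_eq_iff[OF assms] by simp

lemma quotient_op_alt:
  "quotient_op circ \<rho> h \<longleftrightarrow>
   (\<forall>a b \<gamma>. h (cls \<rho> a) \<gamma> (cls \<rho> b) = cls \<rho> ` assoc_hyper circ a \<gamma> b)"
proof -
  have "\<And>S. {\<rho> `` {c} | c. c \<in> S} = cls \<rho> ` S" by blast
  then show ?thesis unfolding quotient_op_def by simp
qed

lemma fr_Q:
  assumes e: "equiv UNIV \<rho>" and f: "fuzzy_rel \<rho> (circ a \<gamma> c) (circ b \<gamma> d)"
  shows "cls \<rho> ` assoc_hyper circ a \<gamma> c = cls \<rho> ` assoc_hyper circ b \<gamma> d"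
proof
  show "cls \<rho> ` assoc_hyper circ a \<gamma> c \<subseteq> cls \<rho> ` assoc_hyper circ b \<gamma> d"
  proof
    fix X assume "X \<in> cls \<rho> ` assoc_hyper circ a \<gamma> c"
    then obtain x where x: "circ a \<gamma> c x > 0" "X = cls \<rho> x" by (auto simp: assoc_hyper_def)
    then obtain y where "circ b \<gamma> d y > 0" "(x,y) \<in> \<rho>" using f unfolding fuzzy_rel_def by blast
    moreover have "cls \<rho> x = cls \<rho> y" using calculation(2) cls_iff[OF e] by blast
    ultimately show "X \<in> cls \<rho> ` assoc_hyper circ b \<gamma> d" using x by (auto simp: assoc_hyper_def)
  qed
next
  show "cls \<rho> ` assoc_hyper circ b \<gamma> d \<subseteq> cls \<rho> ` assoc_hyper circ a \<gamma> c"
  proof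
    fix X assume "X \<in> cls \<rho> ` assoc_hyper circ b \<gamma> d"
    then obtain x where x: "circ b \<gamma> d x > 0" "X = cls \<rho> x" by (auto simp: assoc_hyper_def)
    then obtain y where "circ a \<gamma> c y > 0" "(x,y) \<in> \<rho>" using f unfolding fuzzy_rel_def by blast
    moreover have "cls \<rho> x = cls \<rho> y" using calculation(2) cls_iff[OF e] by blast
    ultimately show "X \<in> cls \<rho> ` assoc_hyper circ a \<gamma> c" using x by (auto simp: assoc_hyper_def)
  qed
qed

lemma Q_fr:
  assumes e: "equiv UNIV \<rho>"
    and q: "cls \<rho> ` assoc_hyper circ a \<gamma> c = cls \<rho> ` assoc_hyper circ b \<gamma> d"
  shows "fuzzy_rel \<rho> (circ a \<gamma> c) (circ b \<gamma> d)"
  unfolding fuzzy_rel_def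
proof (intro conjI allI impI)
  fix x assume "circ a \<gamma> c x > 0"
  then have "cls \<rho> x \<in> cls \<rho> ` assoc_hyper circ b \<gamma> d" using q by (auto simp: assoc_hyper_def)
  then obtain y where "circ b \<gamma> d y > 0" "cls \<rho> x = cls \<rho> y" by (auto simp: assoc_hyper_def)
  then show "\<exists>y. circ b \<gamma> d y > 0 \<and> (x, y) \<in> \<rho>" using cls_iff[OF e] by blast
next
  fix x assume "circ b \<gamma> d x > 0"
  then have "cls \<rho> x \<in> cls \<rho> ` assoc_hyper circ a \<gamma> c" using q by (auto simp: assoc_hyper_def)
  then obtain y where "circ a \<gamma> c y > 0" "cls \<rho> x = cls \<rho> y" by (auto simp: assoc_hyper_def)
  then show "\<exists>y. circ a \<gamma> c y > 0 \<and> (x, y) \<in> \<rho>" using cls_iff[OF e] by blast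
qed

definition hdef :: "('m \<Rightarrow> 'g \<Rightarrow> 'm \<Rightarrow> 'm \<Rightarrow> real) \<Rightarrow> ('m \<times> 'm) set
    \<Rightarrow> 'm set \<Rightarrow> 'g \<Rightarrow> 'm set \<Rightarrow> 'm set set" where
  "hdef circ \<rho> X \<gamma> Y = \<Union>{cls \<rho> ` assoc_hyper circ a \<gamma> b | a b. X = cls \<rho> a \<and> Y = cls \<rho> b}"

lemma hdef_ok:
  assumes e: "equiv UNIV \<rho>"
    and wd: "\<And>a a' b b' \<gamma>. (a,a') \<in> \<rho> \<Longrightarrow> (b,b') \<in> \<rho> \<Longrightarrow>
       cls \<rho> ` assoc_hyper circ a \<gamma> b = cls \<rho> ` assoc_hyper circ a' \<gamma> b'"
  shows "quotient_op circ \<rho> (hdef circ \<rho>)"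
  unfolding quotient_op_alt
proof (intro allI)
  fix a b \<gamma>
  have "{cls \<rho> ` assoc_hyper circ a' \<gamma> b' | a' b'. cls \<rho> a = cls \<rho> a' \<and> cls \<rho> b = cls \<rho> b'}
      = {cls \<rho> ` assoc_hyper circ a \<gamma> b}"
  proof -
    have "\<And>a' b'. cls \<rho> a = cls \<rho> a' \<Longrightarrow> cls \<rho> b = cls \<rho> b' \<Longrightarrow>
        cls \<rho> ` assoc_hyper circ a' \<gamma> b' = cls \<rho> ` assoc_hyper circ a \<gamma> b"
    proof -
      fix a' b' assume "cls \<rho> a = cls \<rho> a'" "cls \<rho> b = cls \<rho> b'"
      then have "(a,a') \<in> \<rho>" "(b,b') \<in> \<rho>" using cls_iff[OF e] by blast+
      then show "cls \<rho> ` assoc_hyper circ a' \<gamma> b' = cls \<rho> ` assoc_hyper circ a \<gamma> b"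
        using wd by metis
    qed
    then show ?thesis by blast
  qed
  then show "hdef circ \<rho> (cls \<rho> a) \<gamma> (cls \<rho> b) = cls \<rho> ` assoc_hyper circ a \<gamma> b"
    unfolding hdef_def by simp
qed

lemma quot_hyper:
  assumes e: "equiv UNIV \<rho>" and q: "quotient_op circ \<rho> h"
    and H: "Gamma_hypersemigroup (UNIV :: 'm set) (assoc_hyper circ)"
  shows "Gamma_hypersemigroup (UNIV // \<rho>) h"
proof -
  have q': "\<And>a b \<gamma>. h (cls \<rho> a) \<gamma> (cls \<rho> b) = cls \<rho> ` assoc_hyper circ a \<gamma> b"
    using q by (simp add: quotient_op_alt)
  have H1: "\<forall>x\<in>UNIV. \<forall>y\<in>UNIV. \<forall>\<gamma>. assoc_hyper circ x \<gamma> y \<noteq> {} \<and> assoc_hyper circ x \<gamma> y \<subseteq> UNIV"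
    using H unfolding Gamma_hypersemigroup_def by (rule conjunct1)
  have H2: "\<forall>x\<in>UNIV. \<forall>y\<in>UNIV. \<forall>z\<in>UNIV. \<forall>\<alpha> \<beta>.
        (\<Union>u\<in>assoc_hyper circ x \<alpha> y. assoc_hyper circ u \<beta> z) = (\<Union>v\<in>assoc_hyper circ y \<beta> z. assoc_hyper circ x \<alpha> v)"
    using H unfolding Gamma_hypersemigroup_def by (rule conjunct2)
  have ne: "\<And>a b \<gamma>. assoc_hyper circ a \<gamma> b \<noteq> {}" using H1 by simp
  have as: "\<And>x y z \<alpha> \<beta>. (\<Union>u\<in>assoc_hyper circ x \<alpha> y. assoc_hyper circ u \<beta> z)
       = (\<Union>v\<in>assoc_hyper circ y \<beta> z. assoc_hyper circ x \<alpha> v)"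
    using H2 by simp
  show ?thesis unfolding Gamma_hypersemigroup_def
  proof (intro conjI ballI allI)
    fix X Y \<gamma> assume "X \<in> UNIV // \<rho>" "Y \<in> UNIV // \<rho>"
    then obtain a b where ab: "X = cls \<rho> a" "Y = cls \<rho> b" by (auto elim!: quotientE)
    show "h X \<gamma> Y \<noteq> {}" using ab q' ne by simp
    show "h X \<gamma> Y \<subseteq> UNIV // \<rho>" using ab q' by (auto intro: quotientI)
  next
    fix X Y Z \<alpha> \<beta> assume "X \<in> UNIV // \<rho>" "Y \<in> UNIV // \<rho>" "Z \<in> UNIV // \<rho>"
    then obtain x y z where xyz: "X = cls \<rho> x" "Y = cls \<rho> y" "Z = cls \<rho> z"
      by (auto elim!: quotientE)
    have "(\<Union>u\<in>h X \<alpha> Y. h u \<beta> Z) = (\<Union>c\<in>assoc_hyper circ x \<alpha> y. cls \<rho> ` assoc_hyper circ c \<beta> z)"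
      using xyz q' by simp
    also have "\<dots> = cls \<rho> ` (\<Union>c\<in>assoc_hyper circ x \<alpha> y. assoc_hyper circ c \<beta> z)"
      by (simp add: image_UN)
    also have "\<dots> = cls \<rho> ` (\<Union>v\<in>assoc_hyper circ y \<beta> z. assoc_hyper circ x \<alpha> v)"
      using as by simp
    also have "\<dots> = (\<Union>v\<in>assoc_hyper circ y \<beta> z. cls \<rho> ` assoc_hyper circ x \<alpha> v)"
      by (simp add: image_UN)
    also have "\<dots> = (\<Union>v\<in>h Y \<beta> Z. h X \<alpha> v)"
      using xyz q' by simp
    finally show "(\<Union>u\<in>h X \<alpha> Y. h u \<beta> Z) = (\<Union>v\<in>h Y \<beta> Z. h X \<alpha> v)" .
  qed
qed

lemma reg_wd:
  assumes e: "equiv UNIV \<rho>" and r: "fuzzy_Gamma_regular circ \<rho>"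
    and "(a,a') \<in> \<rho>" "(b,b') \<in> \<rho>"
  shows "cls \<rho> ` assoc_hyper circ a \<gamma> b = cls \<rho> ` assoc_hyper circ a' \<gamma> b'"
proof -
  have "cls \<rho> ` assoc_hyper circ a \<gamma> b = cls \<rho> ` assoc_hyper circ a' \<gamma> b"
    by (rule fr_Q[OF e]) (use r assms(3) in \<open>simp add: fuzzy_Gamma_regular_def\<close>)
  also have "\<dots> = cls \<rho> ` assoc_hyper circ a' \<gamma> b'"
    by (rule fr_Q[OF e]) (use r assms(4) in \<open>simp add: fuzzy_Gamma_regular_def\<close>)
  finally show ?thesis .
qed

lemma quot_reg:
  assumes e: "equiv UNIV \<rho>" and q: "quotient_op circ \<rho> h"
  shows "fuzzy_Gamma_regular circ \<rho>"
proof -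
  have q': "\<And>a b \<gamma>. h (cls \<rho> a) \<gamma> (cls \<rho> b) = cls \<rho> ` assoc_hyper circ a \<gamma> b"
    using q by (simp add: quotient_op_alt)
  show ?thesis unfolding fuzzy_Gamma_regular_def
  proof (intro allI impI conjI)
    fix a b c \<gamma> assume ab: "(a,b) \<in> \<rho>"
    then have eq: "cls \<rho> a = cls \<rho> b" using cls_iff[OF e] by blast
    show "fuzzy_rel \<rho> (circ a \<gamma> c) (circ b \<gamma> c)"
      by (rule Q_fr[OF e]) (simp add: q'[symmetric] eq)
    show "fuzzy_rel \<rho> (circ c \<gamma> a) (circ c \<gamma> b)"
      by (rule Q_fr[OF e]) (simp add: q'[symmetric] eq)
  qed
qed

theorem theorem5p5:
  fixes circ :: "'m \<Rightarrow> 'g \<Rightarrow> 'm \<Rightarrow> 'm \<Rightarrow> real"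
    and \<rho> :: "('m \<times> 'm) set"
  assumes "fuzzy_Gamma_hypersemigroup circ"
    and "Gamma_hypersemigroup (UNIV :: 'm set) (assoc_hyper circ)"
    and "equiv UNIV \<rho>"
  shows "(fuzzy_Gamma_regular circ \<rho> \<longleftrightarrow>
            (\<exists>h. quotient_op circ \<rho> h \<and> Gamma_hypersemigroup (UNIV // \<rho>) h))
       \<and> (fuzzy_Gamma_strongly_regular circ \<rho> \<longleftrightarrow>
            (\<exists>h. quotient_op circ \<rho> h \<and> Gamma_semigroup (UNIV // \<rho>) h))"
proof -
  note e = assms(3) and H = assms(2)
  have ne: "\<And>a b \<gamma>. \<exists>x. circ a \<gamma> b x > 0" using H
    unfolding Gamma_hypersemigroup_def assoc_hyper_def by blast
  have refl: "\<And>x. (x,x) \<in> \<rho>" using e unfolding equiv_def refl_on_def by blast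
  have part1: "fuzzy_Gamma_regular circ \<rho> \<longleftrightarrow>
            (\<exists>h. quotient_op circ \<rho> h \<and> Gamma_hypersemigroup (UNIV // \<rho>) h)"
  proof
    assume r: "fuzzy_Gamma_regular circ \<rho>"
    have "quotient_op circ \<rho> (hdef circ \<rho>)"
      by (rule hdef_ok[OF e]) (rule reg_wd[OF e r])
    then show "\<exists>h. quotient_op circ \<rho> h \<and> Gamma_hypersemigroup (UNIV // \<rho>) h"
      using quot_hyper[OF e _ H] by blast
  next
    assume "\<exists>h. quotient_op circ \<rho> h \<and> Gamma_hypersemigroup (UNIV // \<rho>) h"
    then show "fuzzy_Gamma_regular circ \<rho>" using quot_reg[OF e] by blast
  qed
  have part2: "fuzzy_Gamma_strongly_regular circ \<rho> \<longleftrightarrow>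
            (\<exists>h. quotient_op circ \<rho> h \<and> Gamma_semigroup (UNIV // \<rho>) h)"
  proof
    assume s: "fuzzy_Gamma_strongly_regular circ \<rho>"
    have r: "fuzzy_Gamma_regular circ \<rho>"
      unfolding fuzzy_Gamma_regular_def fuzzy_rel_def
    proof (intro allI impI conjI)
      fix a b c \<gamma> x assume ab: "(a,b) \<in> \<rho>"
      { assume "circ a \<gamma> c x > 0"
        moreover obtain y where "circ b \<gamma> c y > 0" using ne by blast
        ultimately show "\<exists>y. circ b \<gamma> c y > 0 \<and> (x,y) \<in> \<rho>"
          using s ab refl unfolding fuzzy_Gamma_strongly_regular_def by blast }
      { assume "circ b \<gamma> c x > 0"
        moreover obtain y where "circ a \<gamma> c y > 0" using ne by blast
        ultimately show "\<exists>y. circ a \<gamma> c y > 0 \<and> (x,y) \<in> \<rho>"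
          using s ab refl e unfolding fuzzy_Gamma_strongly_regular_def
          by (meson equiv_def sym_def) }
      { assume "circ c \<gamma> a x > 0"
        moreover obtain y where "circ c \<gamma> b y > 0" using ne by blast
        ultimately show "\<exists>y. circ c \<gamma> b y > 0 \<and> (x,y) \<in> \<rho>"
          using s ab refl unfolding fuzzy_Gamma_strongly_regular_def by blast }
      { assume "circ c \<gamma> b x > 0"
        moreover obtain y where "circ c \<gamma> a y > 0" using ne by blast
        ultimately show "\<exists>y. circ c \<gamma> a y > 0 \<and> (x,y) \<in> \<rho>"
          using s ab refl e unfolding fuzzy_Gamma_strongly_regular_def
          by (meson equiv_def sym_def) }
    qed
    have q: "quotient_op circ \<rho> (hdef circ \<rho>)"
      by (rule hdef_ok[OF e]) (rule reg_wd[OF e r])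
    have q': "\<And>a b \<gamma>. hdef circ \<rho> (cls \<rho> a) \<gamma> (cls \<rho> b) = cls \<rho> ` assoc_hyper circ a \<gamma> b"
      using q by (simp add: quotient_op_alt)
    have sing: "\<forall>X\<in>UNIV // \<rho>. \<forall>Y\<in>UNIV // \<rho>. \<forall>\<gamma>. \<exists>w. hdef circ \<rho> X \<gamma> Y = {w}"
    proof (intro ballI allI)
      fix X Y \<gamma> assume "X \<in> UNIV // \<rho>" "Y \<in> UNIV // \<rho>"
      then obtain a b where ab: "X = cls \<rho> a" "Y = cls \<rho> b" by (auto elim!: quotientE)
      obtain c where c: "circ a \<gamma> b c > 0" using ne by blast
      have all: "\<forall>x\<in>assoc_hyper circ a \<gamma> b. cls \<rho> x = cls \<rho> c"
      proof
        fix x assume "x \<in> assoc_hyper circ a \<gamma> b"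
        then have "circ a \<gamma> b x > 0" by (simp add: assoc_hyper_def)
        then have "(x,c) \<in> \<rho>" using s c refl unfolding fuzzy_Gamma_strongly_regular_def by blast
        then show "cls \<rho> x = cls \<rho> c" using cls_iff[OF e] by blast
      qed
      have "c \<in> assoc_hyper circ a \<gamma> b" using c by (simp add: assoc_hyper_def)
      then have "cls \<rho> ` assoc_hyper circ a \<gamma> b = {cls \<rho> c}" using all by blast
      then show "\<exists>w. hdef circ \<rho> X \<gamma> Y = {w}" using ab q' by simp
    qed
    show "\<exists>h. quotient_op circ \<rho> h \<and> Gamma_semigroup (UNIV // \<rho>) h"
      using q quot_hyper[OF e q H] sing unfolding Gamma_semigroup_def by blast
  next
    assume "\<exists>h. quotient_op circ \<rho> h \<and> Gamma_semigroup (UNIV // \<rho>) h"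
    then obtain h where q: "quotient_op circ \<rho> h" and g: "Gamma_semigroup (UNIV // \<rho>) h" by blast
    have q': "\<And>a b \<gamma>. h (cls \<rho> a) \<gamma> (cls \<rho> b) = cls \<rho> ` assoc_hyper circ a \<gamma> b"
      using q by (simp add: quotient_op_alt)
    show "fuzzy_Gamma_strongly_regular circ \<rho>"
      unfolding fuzzy_Gamma_strongly_regular_def
    proof (intro allI impI)
      fix a b c d \<gamma> x y
      assume ab: "(a,b) \<in> \<rho>" and cd: "(c,d) \<in> \<rho>" and x: "circ a \<gamma> c x > 0" and y: "circ b \<gamma> d y > 0"
      have eq1: "cls \<rho> a = cls \<rho> b" "cls \<rho> c = cls \<rho> d" using ab cd cls_iff[OF e] by blast+
      have "cls \<rho> a \<in> UNIV // \<rho>" "cls \<rho> c \<in> UNIV // \<rho>" by (auto intro: quotientI)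
      then obtain w where w: "h (cls \<rho> a) \<gamma> (cls \<rho> c) = {w}"
        using g unfolding Gamma_semigroup_def by blast
      have "cls \<rho> x \<in> h (cls \<rho> a) \<gamma> (cls \<rho> c)" using q' x by (auto simp: assoc_hyper_def)
      moreover have "cls \<rho> y \<in> h (cls \<rho> a) \<gamma> (cls \<rho> c)" using q' y eq1 by (auto simp: assoc_hyper_def)
      ultimately have "cls \<rho> x = cls \<rho> y" using w by simp
      then show "(x,y) \<in> \<rho>" using cls_iff[OF e] by blast
    qed
  qed
  show ?thesis using part1 part2 by blast
qed

end
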